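(* Let $\mu\in\mathcal{P}(\mathcal{X})$, $0<m_1\le m_2<\infty$, and let $\alpha,\tilde\alpha$ be tail functions with $\mu(B_{m_1})>0$ and $\alpha(r)>0$ for all $r>0$. Then $\mathcal{F}^{\mu}_{\alpha,\tilde\alpha}$ and $\mathcal{G}^{\mu}_{\alpha,\tilde\alpha}$ are cones in $L^2(\mu)$.
   Context: $\mathcal{X}$ is a Polish space with metric $d_{\mathcal{X}}$, $x_0\in\mathcal{X}$ fixed, $B_r=\{x:d_{\mathcal{X}}(x_0,x)\le r\}$, $B_r^{\mathsf c}=\mathcal{X}\setminus B_r$. A tail function is a non-increasing $\alpha:(0,\infty)\to[0,\infty)$ with $\lim_{r\to\infty}\alpha(r)=0$. $\mathcal{F}^{\mu}_{\alpha,\tilde\alpha}$ is the set of $f\in L^2(\mu)$ with $f\mathbf 1_{B_{m_2}}\ge0$ $\mu$-a.s., $\int_{B_r^{\mathsf c}}f_+\,d\mu\le\alpha(r)\int f\,d\mu$ for all $r\ge m_1$, and $\int_{B_r^{\mathsf c}}f_-\,d\mu\le\tilde\alpha(r)\int f\,d\mu$ for all $r\ge m_2$ ($f_+=\max\{f,0\}$, $f_-=-\min\{f,0\}$); $\mathcal{G}^{\mu}_{\alpha,\tilde\alpha}=\{g\in L^2(\mu):\int fg\,d\mu\ge0\text{ for all }f\in\mathcal{F}^{\mu}_{\alpha,\tilde\alpha}\}$. Elements of $L^2(\mu)$ are identified $\mu$-a.s. A cone in a Banach space $\mathsf Y$ is a closed convex set $C$ with $\lambda C\subseteq C$ for all $\lambda>0$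 and $C\cap -C=\{0\}$. *)

theory Defs
  imports "HOL-Probability.Probability"
begin

text \<open>Real-valued square-integrable functions; elements of L2(mu) are represented by
  representatives, and all notions below are invariant under mu-a.e. equality.\<close>
definition L2 :: "'a measure \<Rightarrow> ('a \<Rightarrow> real) set" where
  "L2 M = {f. f \<in> borel_measurable M \<and> integrable M (\<lambda>x. (f x)\<^sup>2)}"

definition L2_norm :: "'a measure \<Rightarrow> ('a \<Rightarrow> real) \<Rightarrow> real" where
  "L2_norm M f = sqrt (\<integral>x. (f x)\<^sup>2 \<partial>M)"

definition L2_cone :: "'a measure \<Rightarrow> ('a \<Rightarrow> real) set \<Rightarrow> bool" where
  "L2_cone M C \<longleftrightarrow>
     C \<subseteq> L2 M \<and>
     (\<forall>f g. (\<forall>n. f n \<in> C) \<and> g \<in> L2 M \<and>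
        (\<lambda>n. L2_norm M (\<lambda>x. f n x - g x)) \<longlonglongrightarrow> 0 \<longrightarrow> g \<in> C) \<and>
     (\<forall>f\<in>C. \<forall>g\<in>C. \<forall>t::real. 0 \<le> t \<and> t \<le> 1 \<longrightarrow> (\<lambda>x. t * f x + (1 - t) * g x) \<in> C) \<and>
     (\<forall>f\<in>C. \<forall>c::real. c > 0 \<longrightarrow> (\<lambda>x. c * f x) \<in> C) \<and>
     (\<lambda>x. 0) \<in> C \<and>
     (\<forall>f\<in>C. (\<lambda>x. - f x) \<in> C \<longrightarrow> (AE x in M. f x = 0))"

definition tail_function :: "(real \<Rightarrow> real) \<Rightarrow> bool" where
  "tail_function a \<longleftrightarrow>
     (\<forall>r s. 0 < r \<and> r \<le> s \<longrightarrow> a s \<le> a r) \<and>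
     (\<forall>r>0. 0 \<le> a r) \<and>
     (a \<longlongrightarrow> 0) at_top"

definition Fset :: "'a::metric_space measure \<Rightarrow> 'a \<Rightarrow> real \<Rightarrow> real \<Rightarrow>
    (real \<Rightarrow> real) \<Rightarrow> (real \<Rightarrow> real) \<Rightarrow> ('a \<Rightarrow> real) set" where
  "Fset M x0 m1 m2 a b = {f \<in> L2 M.
     (AE x in M. x \<in> cball x0 m2 \<longrightarrow> 0 \<le> f x) \<and>
     (\<forall>r\<ge>m1. (\<integral>x. indicator (- cball x0 r) x * max (f x) 0 \<partial>M) \<le> a r * (\<integral>x. f x \<partial>M)) \<and>
     (\<forall>r\<ge>m2. (\<integral>x. indicator (- cball x0 r) x * max (- f x) 0 \<partial>M) \<le> b r * (\<integral>x. f x \<partial>M))}"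

definition Gset :: "'a::metric_space measure \<Rightarrow> 'a \<Rightarrow> real \<Rightarrow> real \<Rightarrow>
    (real \<Rightarrow> real) \<Rightarrow> (real \<Rightarrow> real) \<Rightarrow> ('a \<Rightarrow> real) set" where
  "Gset M x0 m1 m2 a b = {g \<in> L2 M. \<forall>f\<in>Fset M x0 m1 m2 a b. 0 \<le> (\<integral>x. f x * g x \<partial>M)}"

end

theory Submission
  imports Defs
begin

lemma absmul_le: fixes a b :: real shows "\<bar>a*b\<bar> \<le> a^2+b^2"
proof -
  have "0 \<le> (\<bar>a\<bar>-\<bar>b\<bar>)^2" by simp
  hence "2*(\<bar>a\<bar>*\<bar>b\<bar>) \<le> a^2+b^2" by (simp add: power2_eq_square algebra_simps)
  moreover have "0 \<le> \<bar>a\<bar>*\<bar>b\<bar>" by simp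
  ultimately show ?thesis unfolding abs_mult by linarith
qed

lemma L2_meas: "f \<in> L2 M \<Longrightarrow> f \<in> borel_measurable M" by (simp add: L2_def)
lemma L2_sq: "f \<in> L2 M \<Longrightarrow> integrable M (\<lambda>x. (f x)^2)" by (simp add: L2_def)

lemma (in finite_measure) L2_integrable: "f \<in> L2 M \<Longrightarrow> integrable M f"
  unfolding L2_def by (auto intro: square_integrable_imp_integrable)

lemma L2_mult_integrable:
  assumes "f \<in> L2 M" "g \<in> L2 M" shows "integrable M (\<lambda>x. f x * g x)"
proof -
  have "integrable M (\<lambda>x. (f x)^2 + (g x)^2)" using assms unfolding L2_def by auto
  moreover have "(\<lambda>x. f x * g x) \<in> borel_measurable M" using assms unfolding L2_def by (auto intro: borel_measurable_times)
  moreover have "AE x in M. norm (f x * g x) \<le> norm ((f x)^2 + (g x)^2)"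
    using absmul_le by (intro AE_I2) (simp add: abs_mult)
  ultimately show ?thesis by (rule Bochner_Integration.integrable_bound)
qed

lemma L2_lin:
  assumes "f \<in> L2 M" "g \<in> L2 M" shows "(\<lambda>x. a * f x + b * g x) \<in> L2 M"
proof -
  have eq: "(\<lambda>x. (a * f x + b * g x)^2) = (\<lambda>x. a^2*(f x)^2 + 2*a*b*(f x*g x) + b^2*(g x)^2)"
    by (simp add: fun_eq_iff power2_eq_square algebra_simps)
  have "integrable M (\<lambda>x. a^2*(f x)^2 + 2*a*b*(f x*g x) + b^2*(g x)^2)"
    using assms L2_mult_integrable[OF assms] unfolding L2_def by auto
  then have "integrable M (\<lambda>x. (a * f x + b * g x)^2)" by (subst eq)
  then show ?thesis using assms unfolding L2_def by auto
qed

lemma L2_diff: "f \<in> L2 M \<Longrightarrow> g \<in> L2 M \<Longrightarrow> (\<lambda>x. f x - g x) \<in> L2 M"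
  using L2_lin[of f M g 1 "-1"] by simp
lemma L2_scale: "f \<in> L2 M \<Longrightarrow> (\<lambda>x. c * f x) \<in> L2 M"
  using L2_lin[of f M f c 0] by simp
lemma L2_neg: "f \<in> L2 M \<Longrightarrow> (\<lambda>x. - f x) \<in> L2 M"
  using L2_lin[of f M f "-1" 0] by simp
lemma L2_add: "f \<in> L2 M \<Longrightarrow> g \<in> L2 M \<Longrightarrow> (\<lambda>x. f x + g x) \<in> L2 M"
  using L2_lin[of f M g 1 1] by simp

lemma (in finite_measure) L2_bounded:
  assumes "f \<in> borel_measurable M" "\<And>x. \<bar>f x\<bar> \<le> B" shows "f \<in> L2 M"
proof -
  have "integrable M (\<lambda>x. (f x)^2)"
    apply (rule integrable_const_bound[where B="B^2"])
    using assms by (auto intro!: AE_I2) (metis abs_ge_zero order_trans power2_abs power_mono)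
  then show ?thesis using assms unfolding L2_def by auto
qed

lemma CS:
  assumes "f \<in> L2 M" "g \<in> L2 M"
  shows "(\<integral>x. \<bar>f x * g x\<bar> \<partial>M) \<le> L2_norm M f * L2_norm M g"
proof -
  have [measurable]: "f \<in> borel_measurable M" "g \<in> borel_measurable M" using assms L2_meas by auto
  have i1: "integrable M (\<lambda>x. \<bar>f x * g x\<bar>)" using L2_mult_integrable[OF assms] by auto
  have i2: "integrable M (\<lambda>x. (f x)^2)" "integrable M (\<lambda>x. (g x)^2)" using assms L2_sq by auto
  have "(\<integral>\<^sup>+x. ennreal \<bar>f x\<bar> * ennreal \<bar>g x\<bar> \<partial>M)\<^sup>2 \<le> (\<integral>\<^sup>+x. (ennreal \<bar>f x\<bar>) ^ 2 \<partial>M) * (\<integral>\<^sup>+x. (ennreal \<bar>g x\<bar>) ^ 2 \<partial>M)"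
    by (rule Cauchy_Schwarz_nn_integral) auto
  also have "(\<lambda>x. ennreal \<bar>f x\<bar> * ennreal \<bar>g x\<bar>) = (\<lambda>x. ennreal \<bar>f x * g x\<bar>)"
    by (simp add: fun_eq_iff abs_mult ennreal_mult)
  also have "(\<lambda>x. (ennreal \<bar>f x\<bar>)^2) = (\<lambda>x. ennreal ((f x)^2))"
    by (simp add: fun_eq_iff ennreal_power)
  also have "(\<lambda>x. (ennreal \<bar>g x\<bar>)^2) = (\<lambda>x. ennreal ((g x)^2))"
    by (simp add: fun_eq_iff ennreal_power)
  also have "(\<integral>\<^sup>+x. ennreal \<bar>f x * g x\<bar> \<partial>M) = ennreal (\<integral>x. \<bar>f x * g x\<bar> \<partial>M)"
    using i1 by (intro nn_integral_eq_integral) auto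
  also have "(\<integral>\<^sup>+x. ennreal ((f x)^2) \<partial>M) = ennreal (\<integral>x. (f x)^2 \<partial>M)"
    using i2 by (intro nn_integral_eq_integral) auto
  also have "(\<integral>\<^sup>+x. ennreal ((g x)^2) \<partial>M) = ennreal (\<integral>x. (g x)^2 \<partial>M)"
    using i2 by (intro nn_integral_eq_integral) auto
  finally have *: "(ennreal (\<integral>x. \<bar>f x * g x\<bar> \<partial>M))^2 \<le> ennreal (\<integral>x. (f x)^2 \<partial>M) * ennreal (\<integral>x. (g x)^2 \<partial>M)" .
  have p: "0 \<le> (\<integral>x. \<bar>f x * g x\<bar> \<partial>M)" "0 \<le> (\<integral>x. (f x)^2 \<partial>M)" "0 \<le> (\<integral>x. (g x)^2 \<partial>M)"
    by auto
  have "(\<integral>x. \<bar>f x * g x\<bar> \<partial>M)^2 \<le> (\<integral>x. (f x)^2 \<partial>M) * (\<integral>x. (g x)^2 \<partial>M)"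
    using * p by (simp add: ennreal_power ennreal_mult[symmetric] ennreal_le_iff)
  hence "sqrt ((\<integral>x. \<bar>f x * g x\<bar> \<partial>M)^2) \<le> sqrt ((\<integral>x. (f x)^2 \<partial>M) * (\<integral>x. (g x)^2 \<partial>M))"
    using real_sqrt_le_mono by blast
  then show ?thesis using p by (simp add: L2_norm_def real_sqrt_mult)
qed

lemma L2_dom:
  assumes "f \<in> L2 M" "u \<in> borel_measurable M" "\<And>x. x \<in> space M \<Longrightarrow> \<bar>u x\<bar> \<le> \<bar>f x\<bar>"
  shows "u \<in> L2 M"
proof -
  have "integrable M (\<lambda>x. (u x)^2)"
    apply (rule Bochner_Integration.integrable_bound[OF L2_sq[OF assms(1)]])
    using assms(2) apply (auto intro: borel_measurable_power)[1]
    using assms(3) by (auto intro!: AE_I2 simp: abs_le_square_iff)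
  then show ?thesis using assms unfolding L2_def by auto
qed

lemma (in prob_space) L2_one: "(\<lambda>x. 1) \<in> L2 M" "L2_norm M (\<lambda>x. 1) = 1"
  by (auto intro!: L2_bounded simp: L2_norm_def prob_space)

lemma (in prob_space) L1_le_L2: "h \<in> L2 M \<Longrightarrow> (\<integral>x. \<bar>h x\<bar> \<partial>M) \<le> L2_norm M h"
  using CS[OF L2_one(1), of h] L2_one(2) by simp

lemma tendsto_by_L1:
  fixes u :: "nat \<Rightarrow> 'a \<Rightarrow> real"
  assumes "\<And>n. integrable M (u n)" "integrable M v" "\<And>n. integrable M (w n)"
    "\<And>n x. x \<in> space M \<Longrightarrow> \<bar>u n x - v x\<bar> \<le> w n x"
    "(\<lambda>n. \<integral>x. w n x \<partial>M) \<longlonglongrightarrow> 0"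
  shows "(\<lambda>n. \<integral>x. u n x \<partial>M) \<longlonglongrightarrow> (\<integral>x. v x \<partial>M)"
proof -
  have "(\<lambda>n. (\<integral>x. u n x \<partial>M) - (\<integral>x. v x \<partial>M)) \<longlonglongrightarrow> 0"
  proof (rule Lim_null_comparison[OF _ assms(5)])
    show "\<forall>\<^sub>F n in sequentially. norm ((\<integral>x. u n x \<partial>M) - (\<integral>x. v x \<partial>M)) \<le> (\<integral>x. w n x \<partial>M)"
    proof (intro always_eventually allI)
      fix n
      have "norm ((\<integral>x. u n x \<partial>M) - (\<integral>x. v x \<partial>M)) = norm (\<integral>x. u n x - v x \<partial>M)"
        using assms by simp
      also have "\<dots> \<le> (\<integral>x. norm (u n x - v x) \<partial>M)" by (rule integral_norm_bound)
      also have "\<dots> \<le> (\<integral>x. w n x \<partial>M)"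
        using assms by (intro integral_mono) auto
      finally show "norm ((\<integral>x. u n x \<partial>M) - (\<integral>x. v x \<partial>M)) \<le> (\<integral>x. w n x \<partial>M)" .
    qed
  qed
  then show ?thesis by (simp add: LIM_zero_iff)
qed

lemma (in prob_space) L1_conv:
  assumes "\<And>n. h n \<in> L2 M" "g \<in> L2 M" "(\<lambda>n. L2_norm M (\<lambda>x. h n x - g x)) \<longlonglongrightarrow> 0"
  shows "(\<lambda>n. \<integral>x. \<bar>h n x - g x\<bar> \<partial>M) \<longlonglongrightarrow> 0"
proof (rule Lim_null_comparison[OF _ assms(3)])
  show "\<forall>\<^sub>F n in sequentially. norm (\<integral>x. \<bar>h n x - g x\<bar> \<partial>M) \<le> L2_norm M (\<lambda>x. h n x - g x)"
    using L1_le_L2[OF L2_diff[OF assms(1) assms(2)]] by (intro always_eventually) auto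
qed

lemma conv_mult:
  assumes "f \<in> L2 M" "\<And>n. h n \<in> L2 M" "g \<in> L2 M" "(\<lambda>n. L2_norm M (\<lambda>x. h n x - g x)) \<longlonglongrightarrow> 0"
  shows "(\<lambda>n. \<integral>x. f x * h n x \<partial>M) \<longlonglongrightarrow> (\<integral>x. f x * g x \<partial>M)"
proof (rule tendsto_by_L1[where w="\<lambda>n x. \<bar>f x * (h n x - g x)\<bar>"])
  show "\<And>n. integrable M (\<lambda>x. f x * h n x)" "integrable M (\<lambda>x. f x * g x)"
    using assms L2_mult_integrable by auto
  show "\<And>n. integrable M (\<lambda>x. \<bar>f x * (h n x - g x)\<bar>)"
    using assms L2_mult_integrable[OF assms(1) L2_diff] by auto
  show "\<And>n x. \<bar>f x * h n x - f x * g x\<bar> \<le> \<bar>f x * (h n x - g x)\<bar>"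
    by (simp add: algebra_simps)
  show "(\<lambda>n. \<integral>x. \<bar>f x * (h n x - g x)\<bar> \<partial>M) \<longlonglongrightarrow> 0"
  proof (rule Lim_null_comparison)
    show "(\<lambda>n. L2_norm M f * L2_norm M (\<lambda>x. h n x - g x)) \<longlonglongrightarrow> 0"
      using tendsto_mult_right_zero[OF assms(4)] by simp
    show "\<forall>\<^sub>F n in sequentially. norm (\<integral>x. \<bar>f x * (h n x - g x)\<bar> \<partial>M) \<le> L2_norm M f * L2_norm M (\<lambda>x. h n x - g x)"
      using CS[OF assms(1) L2_diff[OF assms(2) assms(3)]] by (intro always_eventually) auto
  qed
qed

lemma pw_lip: "\<bar>indicator S x * max (a::real) 0 - indicator S x * max b 0\<bar> \<le> \<bar>a - b\<bar>"
  by (auto simp: indicator_def max_def)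

lemma pw_conv:
  fixes a b t :: real assumes "0 \<le> t" "t \<le> 1"
  shows "indicator S x * max (t*a + (1-t)*b) 0 \<le> t*(indicator S x * max a 0) + (1-t)*(indicator S x * max b 0)"
proof -
  have "t*a \<le> t * max a 0" using assms by (intro mult_left_mono) auto
  moreover have "(1-t)*b \<le> (1-t) * max b 0" using assms by (intro mult_left_mono) auto
  moreover have "0 \<le> t * max a 0" "0 \<le> (1-t) * max b 0" using assms by auto
  ultimately show ?thesis by (auto simp: indicator_def)
qed

lemma pw_convm:
  fixes a b t :: real assumes "0 \<le> t" "t \<le> 1"
  shows "indicator S x * max (-(t*a + (1-t)*b)) 0 \<le> t*(indicator S x * max (-a) 0) + (1-t)*(indicator S x * max (-b) 0)"
  using pw_conv[OF assms, of S x "-a" "-b"] by (simp add: algebra_simps)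

lemma pw_scale:
  fixes a c :: real assumes "0 < c"
  shows "indicator S x * max (c*a) 0 = c*(indicator S x * max a 0)"
    "indicator S x * max (-(c*a)) 0 = c*(indicator S x * max (-a) 0)"
  using assms by (auto simp: indicator_def max_def mult_le_0_iff zero_le_mult_iff)

locale Lset = prob_space M for M :: "'a::metric_space measure" +
  fixes x0 :: 'a and m1 m2 :: real and a b :: "real \<Rightarrow> real"
  assumes sets_eq: "sets M = sets borel"
    and m1pos: "0 < m1" and m12: "m1 \<le> m2"
    and ta: "tail_function a" and tb: "tail_function b"
    and mball: "measure M (cball x0 m1) > 0"
    and apos: "\<forall>r>0. a r > 0"
begin

abbreviation "FF \<equiv> Fset M x0 m1 m2 a b"
abbreviation "GG \<equiv> Gset M x0 m1 m2 a b"

lemma space_eq: "space M = UNIV"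
  using sets_eq_imp_space_eq[OF sets_eq] by simp

lemma cball_sets[measurable]: "cball x0 r \<in> sets M"
  unfolding sets_eq by simp

lemma ccball_sets[measurable]: "- cball x0 r \<in> sets M"
  unfolding sets_eq by (simp add: borel_open open_Compl)

lemma Pint:
  assumes "f \<in> L2 M" and that: "S \<in> sets M"
  shows "integrable M (\<lambda>x. indicator S x * max (f x) 0)" "integrable M (\<lambda>x. indicator S x * max (- f x) 0)"
proof -
  have [measurable]: "f \<in> borel_measurable M" using assms L2_meas by auto
  show "integrable M (\<lambda>x. indicator S x * max (f x) 0)"
    by (rule L2_integrable, rule L2_dom[OF assms(1)]) (use that in \<open>auto simp: indicator_def\<close>)
  show "integrable M (\<lambda>x. indicator S x * max (- f x) 0)"
    by (rule L2_integrable, rule L2_dom[OF assms(1)]) (use that in \<open>auto simp: indicator_def\<close>)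
qed

lemma F_L2: "f \<in> FF \<Longrightarrow> f \<in> L2 M" by (simp add: Fset_def)

lemma a_nonneg: "r > 0 \<Longrightarrow> 0 \<le> a r" using ta unfolding tail_function_def by auto
lemma b_nonneg: "r > 0 \<Longrightarrow> 0 \<le> b r" using tb unfolding tail_function_def by auto
lemma a_mono: "0 < r \<Longrightarrow> r \<le> s \<Longrightarrow> a s \<le> a r" using ta unfolding tail_function_def by auto

lemma F_closed:
  assumes hF: "\<And>n. h n \<in> FF" and gL: "g \<in> L2 M"
    and conv: "(\<lambda>n. L2_norm M (\<lambda>x. h n x - g x)) \<longlonglongrightarrow> 0"
  shows "g \<in> FF"
proof -
  have hL: "\<And>n. h n \<in> L2 M" using hF F_L2 by auto
  have [measurable]: "g \<in> borel_measurable M" using gL L2_meas by auto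
  have L1: "(\<lambda>n. \<integral>x. \<bar>h n x - g x\<bar> \<partial>M) \<longlonglongrightarrow> 0" by (rule L1_conv[OF hL gL conv])
  have dint: "\<And>n. integrable M (\<lambda>x. \<bar>h n x - g x\<bar>)" using L2_integrable[OF L2_diff[OF hL gL]] by auto
  have Ig: "(\<lambda>n. \<integral>x. h n x \<partial>M) \<longlonglongrightarrow> (\<integral>x. g x \<partial>M)"
    by (rule tendsto_by_L1[OF _ _ dint _ L1]) (auto intro: L2_integrable hL gL)
  have AEh: "\<And>n. AE x in M. x \<in> cball x0 m2 \<longrightarrow> 0 \<le> h n x" using hF unfolding Fset_def by auto
  have neg_int: "integrable M (\<lambda>x. indicator (cball x0 m2) x * max (- g x) 0)"
    using Pint(2)[OF gL cball_sets] by simp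
  have "(\<integral>x. indicator (cball x0 m2) x * max (- g x) 0 \<partial>M) \<le> 0"
  proof (rule LIMSEQ_le_const[OF L1], intro exI allI impI)
    fix n
    show "(\<integral>x. indicator (cball x0 m2) x * max (- g x) 0 \<partial>M) \<le> (\<integral>x. \<bar>h n x - g x\<bar> \<partial>M)"
    proof (rule integral_mono_AE[OF neg_int dint])
      show "AE x in M. indicator (cball x0 m2) x * max (- g x) 0 \<le> \<bar>h n x - g x\<bar>"
        using AEh[of n] by eventually_elim (auto simp: indicator_def)
    qed
  qed
  moreover have "0 \<le> (\<integral>x. indicator (cball x0 m2) x * max (- g x) 0 \<partial>M)" by simp
  ultimately have "(\<integral>x. indicator (cball x0 m2) x * max (- g x) 0 \<partial>M) = 0" by simp
  hence "AE x in M. indicator (cball x0 m2) x * max (- g x) 0 = 0"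
    using integral_nonneg_eq_0_iff_AE[OF neg_int] by simp
  hence AEg: "AE x in M. x \<in> cball x0 m2 \<longrightarrow> 0 \<le> g x"
    by eventually_elim (auto simp: indicator_def max_def split: if_splits)
  have P1: "(\<integral>x. indicator (- cball x0 r) x * max (g x) 0 \<partial>M) \<le> a r * (\<integral>x. g x \<partial>M)" if "r \<ge> m1" for r
  proof (rule LIMSEQ_le)
    show "(\<lambda>n. \<integral>x. indicator (- cball x0 r) x * max (h n x) 0 \<partial>M) \<longlonglongrightarrow> (\<integral>x. indicator (- cball x0 r) x * max (g x) 0 \<partial>M)"
      by (rule tendsto_by_L1[OF _ _ dint _ L1]) (auto intro: Pint hL gL ccball_sets pw_lip)
    show "(\<lambda>n. a r * (\<integral>x. h n x \<partial>M)) \<longlonglongrightarrow> a r * (\<integral>x. g x \<partial>M)"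
      by (intro tendsto_mult_left Ig)
    show "\<exists>N. \<forall>n\<ge>N. (\<integral>x. indicator (- cball x0 r) x * max (h n x) 0 \<partial>M) \<le> a r * (\<integral>x. h n x \<partial>M)"
      using hF that unfolding Fset_def by auto
  qed
  have P2: "(\<integral>x. indicator (- cball x0 r) x * max (- g x) 0 \<partial>M) \<le> b r * (\<integral>x. g x \<partial>M)" if "r \<ge> m2" for r
  proof (rule LIMSEQ_le)
    show "(\<lambda>n. \<integral>x. indicator (- cball x0 r) x * max (- h n x) 0 \<partial>M) \<longlonglongrightarrow> (\<integral>x. indicator (- cball x0 r) x * max (- g x) 0 \<partial>M)"
    proof (rule tendsto_by_L1[OF _ _ dint _ L1])
      fix n x
      show "\<bar>indicator (- cball x0 r) x * max (- h n x) 0 - indicator (- cball x0 r) x * max (- g x) 0\<bar> \<le> \<bar>h n x - g x\<bar>"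
        using pw_lip[of "- cball x0 r" x "- h n x" "- g x"] by simp
    qed (auto intro: Pint hL gL ccball_sets)
    show "(\<lambda>n. b r * (\<integral>x. h n x \<partial>M)) \<longlonglongrightarrow> b r * (\<integral>x. g x \<partial>M)"
      by (intro tendsto_mult_left Ig)
    show "\<exists>N. \<forall>n\<ge>N. (\<integral>x. indicator (- cball x0 r) x * max (- h n x) 0 \<partial>M) \<le> b r * (\<integral>x. h n x \<partial>M)"
      using hF that unfolding Fset_def by auto
  qed
  show ?thesis unfolding Fset_def using gL AEg P1 P2 by auto
qed


lemma F_conv:
  assumes fF: "f \<in> FF" and gF: "g \<in> FF" and t: "0 \<le> t" "t \<le> 1"
  shows "(\<lambda>x. t * f x + (1 - t) * g x) \<in> FF"
proof -
  have fL: "f \<in> L2 M" and gL: "g \<in> L2 M" using fF gF F_L2 by auto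
  have If: "integrable M f" and Ig: "integrable M g" using fL gL L2_integrable by auto
  have Ih: "(\<integral>x. t * f x + (1 - t) * g x \<partial>M) = t * (\<integral>x. f x \<partial>M) + (1 - t) * (\<integral>x. g x \<partial>M)"
    using If Ig by simp
  have AE: "AE x in M. x \<in> cball x0 m2 \<longrightarrow> 0 \<le> t * f x + (1 - t) * g x"
  proof -
    have "AE x in M. x \<in> cball x0 m2 \<longrightarrow> 0 \<le> f x" "AE x in M. x \<in> cball x0 m2 \<longrightarrow> 0 \<le> g x"
      using fF gF unfolding Fset_def by auto
    then show ?thesis by eventually_elim (use t in \<open>auto intro!: add_nonneg_nonneg mult_nonneg_nonneg\<close>)
  qed
  have P1: "(\<integral>x. indicator (- cball x0 r) x * max (t * f x + (1 - t) * g x) 0 \<partial>M) \<le> a r * (\<integral>x. t * f x + (1 - t) * g x \<partial>M)"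
    if r: "r \<ge> m1" for r
  proof -
    let ?S = "- cball x0 r"
    have "(\<integral>x. indicator ?S x * max (t * f x + (1 - t) * g x) 0 \<partial>M)
        \<le> (\<integral>x. t * (indicator ?S x * max (f x) 0) + (1 - t) * (indicator ?S x * max (g x) 0) \<partial>M)"
      using L2_lin[OF fL gL, of t "1-t"] fL gL Pint(1)[OF fL ccball_sets] Pint(1)[OF gL ccball_sets]
      by (intro integral_mono Pint ccball_sets integrable_add integrable_mult_right pw_conv t) auto
    also have "\<dots> = t * (\<integral>x. indicator ?S x * max (f x) 0 \<partial>M) + (1 - t) * (\<integral>x. indicator ?S x * max (g x) 0 \<partial>M)"
      using Pint(1)[OF fL ccball_sets] Pint(1)[OF gL ccball_sets] by simp
    also have "\<dots> \<le> t * (a r * (\<integral>x. f x \<partial>M)) + (1 - t) * (a r * (\<integral>x. g x \<partial>M))"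
      using fF gF r t unfolding Fset_def by (intro add_mono mult_left_mono) auto
    also have "\<dots> = a r * (\<integral>x. t * f x + (1 - t) * g x \<partial>M)" unfolding Ih by (simp add: algebra_simps)
    finally show ?thesis .
  qed
  have P2: "(\<integral>x. indicator (- cball x0 r) x * max (- (t * f x + (1 - t) * g x)) 0 \<partial>M) \<le> b r * (\<integral>x. t * f x + (1 - t) * g x \<partial>M)"
    if r: "r \<ge> m2" for r
  proof -
    let ?S = "- cball x0 r"
    have "(\<integral>x. indicator ?S x * max (- (t * f x + (1 - t) * g x)) 0 \<partial>M)
        \<le> (\<integral>x. t * (indicator ?S x * max (- f x) 0) + (1 - t) * (indicator ?S x * max (- g x) 0) \<partial>M)"
      using Pint(2)[OF L2_lin[OF fL gL, of t "1-t"] ccball_sets] Pint(2)[OF fL ccball_sets] Pint(2)[OF gL ccball_sets]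
      by (intro integral_mono integrable_add integrable_mult_right pw_convm t) auto
    also have "\<dots> = t * (\<integral>x. indicator ?S x * max (- f x) 0 \<partial>M) + (1 - t) * (\<integral>x. indicator ?S x * max (- g x) 0 \<partial>M)"
      using Pint(2)[OF fL ccball_sets] Pint(2)[OF gL ccball_sets] by simp
    also have "\<dots> \<le> t * (b r * (\<integral>x. f x \<partial>M)) + (1 - t) * (b r * (\<integral>x. g x \<partial>M))"
      using fF gF r t unfolding Fset_def by (intro add_mono mult_left_mono) auto
    also have "\<dots> = b r * (\<integral>x. t * f x + (1 - t) * g x \<partial>M)" unfolding Ih by (simp add: algebra_simps)
    finally show ?thesis .
  qed
  show ?thesis unfolding Fset_def using L2_lin[OF fL gL, of t "1-t"] AE P1 P2 by auto
qed

lemma F_scale: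
  assumes fF: "f \<in> FF" and c: "0 < c"
  shows "(\<lambda>x. c * f x) \<in> FF"
proof -
  have fL: "f \<in> L2 M" using fF F_L2 by auto
  have AE: "AE x in M. x \<in> cball x0 m2 \<longrightarrow> 0 \<le> c * f x"
  proof -
    have "AE x in M. x \<in> cball x0 m2 \<longrightarrow> 0 \<le> f x" using fF unfolding Fset_def by auto
    then show ?thesis by eventually_elim (use c in auto)
  qed
  have P1: "(\<integral>x. indicator (- cball x0 r) x * max (c * f x) 0 \<partial>M) \<le> a r * (\<integral>x. c * f x \<partial>M)"
    if r: "r \<ge> m1" for r
  proof -
    have "(\<integral>x. indicator (- cball x0 r) x * max (c * f x) 0 \<partial>M) = c * (\<integral>x. indicator (- cball x0 r) x * max (f x) 0 \<partial>M)"
      by (simp add: pw_scale[OF c])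
    also have "\<dots> \<le> c * (a r * (\<integral>x. f x \<partial>M))" using fF r c unfolding Fset_def by (intro mult_left_mono) auto
    finally show ?thesis by (simp add: algebra_simps)
  qed
  have P2: "(\<integral>x. indicator (- cball x0 r) x * max (- (c * f x)) 0 \<partial>M) \<le> b r * (\<integral>x. c * f x \<partial>M)"
    if r: "r \<ge> m2" for r
  proof -
    have "(\<integral>x. indicator (- cball x0 r) x * max (- (c * f x)) 0 \<partial>M) = c * (\<integral>x. indicator (- cball x0 r) x * max (- f x) 0 \<partial>M)"
      by (simp add: pw_scale[OF c])
    also have "\<dots> \<le> c * (b r * (\<integral>x. f x \<partial>M))" using fF r c unfolding Fset_def by (intro mult_left_mono) auto
    finally show ?thesis by (simp add: algebra_simps)
  qed
  show ?thesis unfolding Fset_def using L2_scale[OF fL] AE P1 P2 by auto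
qed

lemma F_zero: "(\<lambda>x. 0) \<in> FF"
  unfolding Fset_def using L2_bounded[of "\<lambda>x. 0" 0] by auto

lemma F_antisym:
  assumes fF: "f \<in> FF" and nF: "(\<lambda>x. - f x) \<in> FF"
  shows "AE x in M. f x = 0"
proof -
  have fL: "f \<in> L2 M" using fF F_L2 by auto
  have m2pos: "0 < m2" using m1pos m12 by simp
  have am2: "0 < a m2" using apos m2pos by auto
  let ?S = "- cball x0 m2"
  have A1: "(\<integral>x. indicator ?S x * max (f x) 0 \<partial>M) \<le> a m2 * (\<integral>x. f x \<partial>M)"
    using fF m12 unfolding Fset_def by auto
  have A2: "(\<integral>x. indicator ?S x * max (- f x) 0 \<partial>M) \<le> a m2 * (\<integral>x. - f x \<partial>M)"
    using nF m12 unfolding Fset_def by auto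
  have N1: "0 \<le> (\<integral>x. indicator ?S x * max (f x) 0 \<partial>M)" "0 \<le> (\<integral>x. indicator ?S x * max (- f x) 0 \<partial>M)"
    by auto
  have A2': "(\<integral>x. indicator ?S x * max (- f x) 0 \<partial>M) \<le> - (a m2 * (\<integral>x. f x \<partial>M))" using A2 by simp
  have "0 \<le> a m2 * (\<integral>x. f x \<partial>M)" "a m2 * (\<integral>x. f x \<partial>M) \<le> 0" using A1 A2' N1 by linarith+
  hence I0: "(\<integral>x. f x \<partial>M) = 0" using am2 by (metis antisym mult_eq_0_iff less_irrefl)
  have Z1: "(\<integral>x. indicator ?S x * max (f x) 0 \<partial>M) = 0" using A1 N1 I0 by simp
  have Z2: "(\<integral>x. indicator ?S x * max (- f x) 0 \<partial>M) = 0" using A2 N1 I0 by simp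
  have E1: "AE x in M. indicator ?S x * max (f x) 0 = 0"
    using Z1 integral_nonneg_eq_0_iff_AE[OF Pint(1)[OF fL ccball_sets]] by simp
  have E2: "AE x in M. indicator ?S x * max (- f x) 0 = 0"
    using Z2 integral_nonneg_eq_0_iff_AE[OF Pint(2)[OF fL ccball_sets]] by simp
  have E3: "AE x in M. x \<in> cball x0 m2 \<longrightarrow> 0 \<le> f x" using fF unfolding Fset_def by auto
  have E4: "AE x in M. x \<in> cball x0 m2 \<longrightarrow> 0 \<le> - f x" using nF unfolding Fset_def by auto
  from E1 E2 E3 E4 show ?thesis
    by eventually_elim (auto simp: indicator_def max_def split: if_splits)
qed

lemma F_cone: "L2_cone M FF"
  unfolding L2_cone_def using F_L2 F_closed F_conv F_scale F_zero F_antisym by blast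


lemma G_L2: "g \<in> GG \<Longrightarrow> g \<in> L2 M" by (simp add: Gset_def)
lemma G_pos: "g \<in> GG \<Longrightarrow> f \<in> FF \<Longrightarrow> 0 \<le> (\<integral>x. f x * g x \<partial>M)" by (simp add: Gset_def)

lemma G_closed:
  assumes hG: "\<And>n. h n \<in> GG" and gL: "g \<in> L2 M"
    and conv: "(\<lambda>n. L2_norm M (\<lambda>x. h n x - g x)) \<longlonglongrightarrow> 0"
  shows "g \<in> GG"
proof -
  have "0 \<le> (\<integral>x. f x * g x \<partial>M)" if fF: "f \<in> FF" for f
    by (rule LIMSEQ_le_const[OF conv_mult[OF F_L2[OF fF] G_L2[OF hG] gL conv]])
       (use G_pos[OF hG fF] in auto)
  then show ?thesis unfolding Gset_def using gL by auto
qed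

lemma G_conv:
  assumes gG: "g \<in> GG" and hG: "h \<in> GG" and t: "0 \<le> t" "t \<le> 1"
  shows "(\<lambda>x. t * g x + (1 - t) * h x) \<in> GG"
proof -
  have "0 \<le> (\<integral>x. f x * (t * g x + (1 - t) * h x) \<partial>M)" if fF: "f \<in> FF" for f
  proof -
    have i1: "integrable M (\<lambda>x. f x * g x)" "integrable M (\<lambda>x. f x * h x)"
      using L2_mult_integrable F_L2[OF fF] G_L2[OF gG] G_L2[OF hG] by auto
    have "(\<integral>x. f x * (t * g x + (1 - t) * h x) \<partial>M) = (\<integral>x. t * (f x * g x) + (1 - t) * (f x * h x) \<partial>M)"
      by (simp add: algebra_simps)
    also have "\<dots> = t * (\<integral>x. f x * g x \<partial>M) + (1 - t) * (\<integral>x. f x * h x \<partial>M)" using i1 by simp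
    also have "\<dots> \<ge> 0" using G_pos[OF gG fF] G_pos[OF hG fF] t by simp
    finally show ?thesis .
  qed
  then show ?thesis unfolding Gset_def using L2_lin[OF G_L2[OF gG] G_L2[OF hG]] by auto
qed

lemma G_scale:
  assumes gG: "g \<in> GG" and c: "0 < c"
  shows "(\<lambda>x. c * g x) \<in> GG"
proof -
  have "0 \<le> (\<integral>x. f x * (c * g x) \<partial>M)" if fF: "f \<in> FF" for f
  proof -
    have "(\<integral>x. f x * (c * g x) \<partial>M) = c * (\<integral>x. f x * g x \<partial>M)"
      by (simp add: algebra_simps)
    then show ?thesis using G_pos[OF gG fF] c by simp
  qed
  then show ?thesis unfolding Gset_def using L2_scale[OF G_L2[OF gG]] by auto
qed

lemma G_zero: "(\<lambda>x. 0) \<in> GG"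
  unfolding Gset_def using L2_bounded[of "\<lambda>x. 0" 0] by auto

lemma testF:
  assumes R: "R \<ge> m1" and A: "A \<in> sets M" "A \<subseteq> cball x0 R"
  defines "c \<equiv> 1 / (a R * measure M (cball x0 m1))"
  shows "(\<lambda>x. indicator A x + c * indicator (cball x0 m1) x) \<in> FF"
proof -
  let ?B = "cball x0 m1"
  let ?f = "\<lambda>x. indicator A x + c * indicator ?B x :: real"
  have aR: "0 < a R" using apos R m1pos by auto
  have c: "0 < c" unfolding c_def using aR mball by simp
  have key: "a R * (c * measure M ?B) = 1" unfolding c_def using aR mball by simp
  have [measurable]: "A \<in> sets M" using A by simp
  have fm: "?f \<in> borel_measurable M" by measurable
  have fL: "?f \<in> L2 M"
    by (rule L2_bounded[OF fm, of "1 + c"]) (use c in \<open>auto simp: indicator_def\<close>)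
  have fpos: "\<And>x. 0 \<le> ?f x" using c by (auto simp: indicator_def)
  have If: "(\<integral>x. ?f x \<partial>M) = measure M A + c * measure M ?B"
  proof -
    have "integrable M (indicator A :: 'a \<Rightarrow> real)" "integrable M (indicator ?B :: 'a \<Rightarrow> real)"
      by (auto intro!: integrable_real_indicator simp: less_top[symmetric])
    then show ?thesis by (simp add: integral_indicator)
  qed
  have If2: "c * measure M ?B \<le> (\<integral>x. ?f x \<partial>M)" unfolding If by simp
  have If0: "0 \<le> (\<integral>x. ?f x \<partial>M)" using fpos by simp
  have P1: "(\<integral>x. indicator (- cball x0 r) x * max (?f x) 0 \<partial>M) \<le> a r * (\<integral>x. ?f x \<partial>M)"
    if r: "r \<ge> m1" for r
  proof (cases "r \<ge> R")
    case True
    have "(\<lambda>x. indicator (- cball x0 r) x * max (?f x) 0) = (\<lambda>x. 0::real)"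
      using A(2) True r by (force simp: fun_eq_iff indicator_def subset_iff)
    then show ?thesis using a_nonneg[of r] r m1pos If0 by (simp only:) simp
  next
    case False
    have "(\<integral>x. indicator (- cball x0 r) x * max (?f x) 0 \<partial>M) \<le> (\<integral>x. 1 \<partial>M)"
      using Pint(1)[OF fL ccball_sets] r by (intro integral_mono) (auto simp: indicator_def)
    also have "\<dots> = 1" by (simp add: prob_space)
    also have "\<dots> = a R * (c * measure M ?B)" using key by simp
    also have "\<dots> \<le> a r * (\<integral>x. ?f x \<partial>M)"
      using False r m1pos a_mono[of r R] aR If2 c
      by (intro mult_mono) auto
    finally show ?thesis .
  qed
  have P2: "(\<integral>x. indicator (- cball x0 r) x * max (- ?f x) 0 \<partial>M) \<le> b r * (\<integral>x. ?f x \<partial>M)"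
    if r: "r \<ge> m2" for r
  proof -
    have "max (- ?f x) 0 = 0" for x using fpos[of x] by linarith
    then have "(\<lambda>x. indicator (- cball x0 r) x * max (- ?f x) 0) = (\<lambda>x. 0::real)" by simp
    then show ?thesis using b_nonneg[of r] r m1pos m12 If0 by (simp only:) simp
  qed
  show ?thesis unfolding Fset_def using fL fpos P1 P2 by auto
qed

lemma G_antisym:
  assumes gG: "g \<in> GG" and nG: "(\<lambda>x. - g x) \<in> GG"
  shows "AE x in M. g x = 0"
proof -
  have gL: "g \<in> L2 M" using gG G_L2 by auto
  have [measurable]: "g \<in> borel_measurable M" using gL L2_meas by auto
  have zero: "(\<integral>x. f x * g x \<partial>M) = 0" if fF: "f \<in> FF" for f
    using G_pos[OF gG fF] G_pos[OF nG fF] by simp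
  have indL: "indicator S \<in> L2 M" if "S \<in> sets M" for S
    by (rule L2_bounded[of _ 1]) (use that in \<open>auto simp: indicator_def\<close>)
  have key: "(\<integral>x. indicator A x * g x \<partial>M) = 0" if R: "R \<ge> m1" and A: "A \<in> sets M" "A \<subseteq> cball x0 R" for R A
  proof -
    define c where "c = 1 / (a R * measure M (cball x0 m1))"
    have lin: "(\<integral>x. (indicator S x + c * indicator (cball x0 m1) x) * g x \<partial>M)
        = (\<integral>x. indicator S x * g x \<partial>M) + c * (\<integral>x. indicator (cball x0 m1) x * g x \<partial>M)"
      if "S \<in> sets M" for S :: "'a set"
    proof -
      have "integrable M (\<lambda>x. indicator S x * g x)" "integrable M (\<lambda>x. indicator (cball x0 m1) x * g x)"
        using L2_mult_integrable[OF indL gL] that by auto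
      then show ?thesis by (simp add: distrib_right mult.assoc)
    qed
    have "(\<integral>x. (indicator {} x + c * indicator (cball x0 m1) x) * g x \<partial>M) = 0"
      using zero[OF testF[OF R, of "{}"]] c_def by simp
    hence z1: "c * (\<integral>x. indicator (cball x0 m1) x * g x \<partial>M) = 0" using lin[of "{}"] by simp
    have "(\<integral>x. (indicator A x + c * indicator (cball x0 m1) x) * g x \<partial>M) = 0"
      using zero[OF testF[OF R A]] c_def by simp
    then show ?thesis using lin[OF A(1)] z1 by simp
  qed
  have ball0: "AE x in M. x \<in> cball x0 R \<longrightarrow> g x = 0" if R: "R \<ge> m1" for R
  proof -
    define A1 where "A1 = {x \<in> space M. 0 < g x} \<inter> cball x0 R"
    define A2 where "A2 = {x \<in> space M. g x < 0} \<inter> cball x0 R"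
    have A1s: "A1 \<in> sets M" unfolding A1_def by measurable
    have A2s: "A2 \<in> sets M" unfolding A2_def by measurable
    have i1: "integrable M (\<lambda>x. indicator A1 x * g x)" using L2_mult_integrable[OF indL[OF A1s] gL] .
    have i2: "integrable M (\<lambda>x. - (indicator A2 x * g x))" using L2_mult_integrable[OF indL[OF A2s] gL] by simp
    have "(\<integral>x. indicator A1 x * g x \<partial>M) = 0" using key[OF R A1s] A1_def by auto
    hence e1: "AE x in M. indicator A1 x * g x = 0"
      using integral_nonneg_eq_0_iff_AE[OF i1] by (simp add: A1_def indicator_def)
    have "(\<integral>x. - (indicator A2 x * g x) \<partial>M) = 0" using key[OF R A2s] A2_def by auto
    hence e2: "AE x in M. - (indicator A2 x * g x) = 0"
      using integral_nonneg_eq_0_iff_AE[OF i2] by (simp add: A2_def indicator_def)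
    from e1 e2 show ?thesis
      by eventually_elim (auto simp: A1_def A2_def indicator_def space_eq split: if_splits)
  qed
  have "AE x in M. \<forall>n::nat. x \<in> cball x0 (m1 + real n) \<longrightarrow> g x = 0"
    unfolding AE_all_countable using ball0 m1pos by auto
  then show ?thesis
  proof (rule eventually_mono)
    fix x assume H: "\<forall>n::nat. x \<in> cball x0 (m1 + real n) \<longrightarrow> g x = 0"
    obtain n :: nat where "dist x0 x < real n" using reals_Archimedean2 by blast
    then have "x \<in> cball x0 (m1 + real n)" using m1pos by simp
    then show "g x = 0" using H by blast
  qed
qed

lemma G_cone: "L2_cone M GG"
  unfolding L2_cone_def using G_L2 G_closed G_conv G_scale G_zero G_antisym by blast

end

theorem lemma3p1:
  fixes \<mu> :: "'a::polish_space measure" and x0 :: 'a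
    and m1 m2 :: real and \<alpha> \<alpha>t :: "real \<Rightarrow> real"
  assumes "prob_space \<mu>" and "sets \<mu> = sets borel"
    and "0 < m1" and "m1 \<le> m2"
    and "tail_function \<alpha>" and "tail_function \<alpha>t"
    and "measure \<mu> (cball x0 m1) > 0"
    and "\<forall>r>0. \<alpha> r > 0"
  shows "L2_cone \<mu> (Fset \<mu> x0 m1 m2 \<alpha> \<alpha>t) \<and> L2_cone \<mu> (Gset \<mu> x0 m1 m2 \<alpha> \<alpha>t)"
proof -
  interpret Lset \<mu> x0 m1 m2 \<alpha> \<alpha>t
    by (rule Lset.intro[OF assms(1)], unfold_locales) (use assms in auto)
  show ?thesis using F_cone G_cone by simp
qed

end
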